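(* Let $A\in\mathbb{R}^{m\times N}$ with $N=pn$, and let $\mathbf{x}\in\mathbb{R}^N$ be block $k$-sparse, i.e. $\lVert\mathbf{x}\rVert_{2,0}\le k$. Suppose there exists at least one $q\in(1,\infty]$ such that $$k<\min_{\mathbf{z}\in\ker A\setminus\{\mathbf{0}\}} 2^{\frac{q}{1-q}}\,k_q(\mathbf{z}).$$ Then the unique solution of the noise-free block basis pursuit problem $$\min_{\mathbf{z}\in\mathbb{R}^N}\lVert\mathbf{z}\rVert_{2,1}\quad\text{s.t.}\quad A\mathbf{z}=A\mathbf{x}$$ is $\mathbf{x}$.
   Context: Every $\mathbf{x}\in\mathbb{R}^N$ is partitioned into $p$ consecutive blocks of length $n$: $\mathbf{x}=[\mathbf{x}_1^T,\dots,\mathbf{x}_p^T]^T$ with $\mathbf{x}_i\in\mathbb{R}^n$. Mixed norms: $\lVert\mathbf{x}\rVert_{2,0}=\#\{i:\mathbf{x}_i\neq\mathbf{0}\}$, $\lVert\mathbf{x}\rVert_{2,q}=(\sum_{i=1}^p\lVert\mathbf{x}_i\rVert_2^q)^{1/q}$ for $0<q<\infty$, $\lVert\mathbf{x}\rVert_{2,\infty}=\max_i\lVert\mathbf{x}_i\rVert_2$. For nonzero $\mathbf{x}$ and $q\in(1,\infty)$ the $q$-ratio block sparsity is $k_q(\mathbf{x})=\left(\lVert\mathbf{x}\rVert_{2,1}/\lVert\mathbf{x}\rVert_{2,q}\right)^{q/(q-1)}$, and $k_\infty(\mathbf{x})=\lVert\mathbf{x}\rVert_{2,1}/\lVert\mathbf{x}\rVert_{2,\infty}$.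 For $q=\infty$ the exponent $q/(1-q)$ is interpreted as its limit $-1$ (and $q/(q-1)$ as $1$). $\ker A=\{\mathbf{z}:A\mathbf{z}=\mathbf{0}\}$. *)

theory Defs
  imports "HOL-Analysis.Analysis"
begin

text \<open>Vectors of R^N are represented as functions nat => real vanishing outside {..<N}.
  A vector is split into p consecutive blocks of length n (N = p*n); block i consists of
  the entries i*n, ..., i*n+n-1.  A matrix A in R^(m x N) is a function nat => nat => real
  of which only the entries A i j with i < m, j < N matter.\<close>

definition vecs :: "nat \<Rightarrow> (nat \<Rightarrow> real) set" where
  "vecs N = {z. \<forall>j\<ge>N. z j = 0}"

definition matvec :: "nat \<Rightarrow> nat \<Rightarrow> (nat \<Rightarrow> nat \<Rightarrow> real) \<Rightarrow> (nat \<Rightarrow> real) \<Rightarrow> (nat \<Rightarrow> real)" where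
  "matvec m N A z = (\<lambda>i. if i < m then (\<Sum>j<N. A i j * z j) else 0)"

definition kernel :: "nat \<Rightarrow> nat \<Rightarrow> (nat \<Rightarrow> nat \<Rightarrow> real) \<Rightarrow> (nat \<Rightarrow> real) set" where
  "kernel m N A = {z \<in> vecs N. matvec m N A z = (\<lambda>_. 0)}"

definition block_norm :: "nat \<Rightarrow> (nat \<Rightarrow> real) \<Rightarrow> nat \<Rightarrow> real" where
  "block_norm n x i = sqrt (\<Sum>j<n. (x (i * n + j))\<^sup>2)"

definition norm20 :: "nat \<Rightarrow> nat \<Rightarrow> (nat \<Rightarrow> real) \<Rightarrow> nat" where
  "norm20 p n x = card {i. i < p \<and> (\<exists>j<n. x (i * n + j) \<noteq> 0)}"

definition norm21 :: "nat \<Rightarrow> nat \<Rightarrow> (nat \<Rightarrow> real) \<Rightarrow> real" where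
  "norm21 p n x = (\<Sum>i<p. block_norm n x i)"

definition norm2q :: "nat \<Rightarrow> nat \<Rightarrow> real \<Rightarrow> (nat \<Rightarrow> real) \<Rightarrow> real" where
  "norm2q p n q x = (\<Sum>i<p. block_norm n x i powr q) powr (1 / q)"

definition norm2inf :: "nat \<Rightarrow> nat \<Rightarrow> (nat \<Rightarrow> real) \<Rightarrow> real" where
  "norm2inf p n x = Max (block_norm n x ` {..<p})"

definition kq :: "nat \<Rightarrow> nat \<Rightarrow> ereal \<Rightarrow> (nat \<Rightarrow> real) \<Rightarrow> real" where
  "kq p n q x = (if q = \<infinity> then norm21 p n x / norm2inf p n x
     else (norm21 p n x / norm2q p n (real_of_ereal q) x)
            powr (real_of_ereal q / (real_of_ereal q - 1)))"

definition twofac :: "ereal \<Rightarrow> real" where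
  "twofac q = (if q = \<infinity> then 2 powr (-1)
     else 2 powr (real_of_ereal q / (1 - real_of_ereal q)))"

end

theory Submission
  imports Defs
begin

lemma bn_L2: "block_norm n x i = L2_set (\<lambda>j. x (i*n+j)) {..<n}"
  by (simp add: block_norm_def L2_set_def)

lemma bn_nonneg: "0 \<le> block_norm n x i"
  by (simp add: block_norm_def sum_nonneg)

lemma bn_tri: "block_norm n x i \<le> block_norm n z i + block_norm n (\<lambda>j. x j - z j) i"
proof -
  have "L2_set (\<lambda>j. x (i*n+j)) {..<n} = L2_set (\<lambda>j. z (i*n+j) + (x (i*n+j) - z (i*n+j))) {..<n}"
    by simp
  also have "\<dots> \<le> L2_set (\<lambda>j. z (i*n+j)) {..<n} + L2_set (\<lambda>j. x (i*n+j) - z (i*n+j)) {..<n}"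
    by (rule L2_set_triangle_ineq)
  finally show ?thesis by (simp add: bn_L2)
qed

lemma bn_zero: "(\<forall>j<n. x (i*n+j) = 0) \<Longrightarrow> block_norm n x i = 0"
  by (simp add: block_norm_def)

lemma bn_pos: "x (i*n+j) \<noteq> 0 \<Longrightarrow> j < n \<Longrightarrow> 0 < block_norm n x i"
proof -
  assume a: "x (i*n+j) \<noteq> 0" "j < n"
  have "0 < (x (i*n+j))\<^sup>2" using a by simp
  also have "\<dots> \<le> (\<Sum>j<n. (x (i * n + j))\<^sup>2)"
    by (rule member_le_sum) (use a in auto)
  finally show ?thesis by (simp add: block_norm_def)
qed

lemma exists_pos_block:
  assumes "h \<in> vecs (p*n)" "h \<noteq> (\<lambda>_. 0)"
  shows "\<exists>i<p. 0 < block_norm n h i"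
proof -
  obtain j where j: "h j \<noteq> 0" using assms(2) by auto
  have jl: "j < p*n" using assms(1) j unfolding vecs_def using not_le by blast
  then have n0: "0 < n" by (cases n) auto
  have "j div n < p" using jl by (simp add: less_mult_imp_div_less)
  moreover have "h ((j div n)*n + j mod n) \<noteq> 0" using j by simp
  ultimately show ?thesis using bn_pos n0 by (meson mod_less_divisor)
qed

lemma holder_part:
  fixes b :: "nat \<Rightarrow> real" and r :: real
  assumes r: "1 < r" and fin: "finite S" and b: "\<And>i. 0 \<le> b i"
  shows "(\<Sum>i\<in>S. b i) \<le> real (card S) powr (1 - 1/r) * (\<Sum>i\<in>S. b i powr r) powr (1/r)"
proof -
  define S' where "S' = {i\<in>S. 0 < b i}"
  have finS': "finite S'" using fin by (simp add: S'_def)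
  have sub: "S' \<subseteq> S" by (auto simp: S'_def)
  have eq1: "(\<Sum>i\<in>S. b i) = (\<Sum>i\<in>S'. b i)"
    by (rule sum.mono_neutral_right[OF fin sub]) (use b in \<open>auto simp: S'_def less_le\<close>)
  have T: "(\<Sum>i\<in>S'. b i powr r) \<le> (\<Sum>i\<in>S. b i powr r)"
    by (rule sum_mono2[OF fin sub]) auto
  have c: "card S' \<le> card S" using card_mono[OF fin sub] .
  show ?thesis
  proof (cases "S' = {}")
    case True
    then show ?thesis using eq1 by simp
  next
    case False
    define c where "c = real (card S')"
    have cpos: "0 < c" using False finS' by (simp add: c_def card_gt_0_iff)
    have "(\<Sum>i\<in>S'. (1/c) *\<^sub>R b i) powr r \<le> (\<Sum>i\<in>S'. (1/c) * b i powr r)"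
      apply (rule convex_on_sum[OF finS' False powr_convex[of r]])
      using r cpos by (auto simp: c_def S'_def)
    then have J: "((\<Sum>i\<in>S'. b i) / c) powr r \<le> (\<Sum>i\<in>S'. b i powr r) / c"
      by (simp add: sum_distrib_left[symmetric] sum_divide_distrib[symmetric])
    have sb: "0 \<le> (\<Sum>i\<in>S'. b i)" using b by (simp add: sum_nonneg)
    have "(\<Sum>i\<in>S'. b i) / c = (((\<Sum>i\<in>S'. b i) / c) powr r) powr (1/r)"
      using r sb cpos by (simp add: powr_powr)
    also have "\<dots> \<le> ((\<Sum>i\<in>S'. b i powr r) / c) powr (1/r)"
      by (rule powr_mono2) (use r J in auto)
    also have "\<dots> = (\<Sum>i\<in>S'. b i powr r) powr (1/r) / c powr (1/r)"
      by (rule powr_divide)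
    finally have "(\<Sum>i\<in>S'. b i) \<le> c * ((\<Sum>i\<in>S'. b i powr r) powr (1/r) / c powr (1/r))"
      using cpos by (simp add: divide_simps mult.commute)
    also have "\<dots> = c powr (1 - 1/r) * (\<Sum>i\<in>S'. b i powr r) powr (1/r)"
      using cpos by (simp add: powr_diff)
    also have "\<dots> \<le> real (card S) powr (1 - 1/r) * (\<Sum>i\<in>S. b i powr r) powr (1/r)"
      apply (rule mult_mono)
      using r c T cpos by (auto simp: c_def intro!: powr_mono2 sum_nonneg)
    finally show ?thesis using eq1 by simp
  qed
qed

lemma nsp:
  assumes h: "h \<in> kernel m (p*n) A - {\<lambda>_. 0}" and S: "S \<subseteq> {..<p}" and cS: "card S \<le> k"
    and q: "1 < q"
    and hyp: "ereal (real k) < (INF z \<in> kernel m (p * n) A - {\<lambda>_. 0}. ereal (twofac q * kq p n q z))"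
  shows "2 * (\<Sum>i\<in>S. block_norm n h i) < norm21 p n h"
proof -
  define b where "b = block_norm n h"
  have b0: "\<And>i. 0 \<le> b i" by (simp add: b_def bn_nonneg)
  have "(INF z \<in> kernel m (p * n) A - {\<lambda>_. 0}. ereal (twofac q * kq p n q z)) \<le> ereal (twofac q * kq p n q h)"
    by (rule INF_lower[OF h])
  with hyp have kl: "real k < twofac q * kq p n q h" using order.strict_trans2 ereal_less_eq(3) by fastforce
  have hv: "h \<in> vecs (p*n)" "h \<noteq> (\<lambda>_. 0)" using h by (auto simp: kernel_def)
  obtain i0 where i0: "i0 < p" "0 < b i0" using exists_pos_block[OF hv] b_def by auto
  have finS: "finite S" using S finite_subset by blast
  define N1 where "N1 = (\<Sum>i<p. b i)"
  have N1eq: "norm21 p n h = N1" by (simp add: norm21_def N1_def b_def)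
  have "b i0 \<le> N1" unfolding N1_def by (rule member_le_sum) (use i0 b0 in auto)
  then have N1pos: "0 < N1" using i0 by simp
  show ?thesis
  proof (cases "q = \<infinity>")
    case True
    define M where "M = Max (b ` {..<p})"
    have bM: "\<And>i. i < p \<Longrightarrow> b i \<le> M" unfolding M_def by (rule Max_ge) auto
    have Mpos: "0 < M" using bM[OF i0(1)] i0 by simp
    have "real k < (1/2) * (N1 / M)" using kl True
      by (simp add: twofac_def kq_def norm21_def norm2inf_def N1_def M_def b_def powr_minus_divide)
    then have kM: "real k * M < N1 / 2" using Mpos by (simp add: field_simps)
    have "(\<Sum>i\<in>S. b i) \<le> (\<Sum>i\<in>S. M)" by (rule sum_mono) (use S bM in auto)
    also have "\<dots> = real (card S) * M" by simp
    also have "\<dots> \<le> real k * M" using cS Mpos by simp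
    finally show ?thesis using kM N1eq b_def by simp
  next
    case False
    obtain r where qr: "q = ereal r" using q False by (cases q) auto
    have r: "1 < r" using q qr by simp
    define Nq where "Nq = (\<Sum>i<p. b i powr r) powr (1/r)"
    have "b i0 powr r \<le> (\<Sum>i<p. b i powr r)" by (rule member_le_sum) (use i0 in auto)
    then have "0 < (\<Sum>i<p. b i powr r)" using i0 by (smt (verit) powr_gt_zero)
    then have Nqpos: "0 < Nq" unfolding Nq_def by simp
    define e where "e = r / (r - 1)"
    have epos: "0 < e" using r by (simp add: e_def)
    have e1: "r / (1 - r) = - e" using r by (simp add: e_def field_simps)
    define Y where "Y = N1 / (2 * Nq)"
    have Ypos: "0 < Y" using N1pos Nqpos by (simp add: Y_def)
    have "twofac q * kq p n q h = 2 powr (- e) * (N1 / Nq) powr e"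
      using False qr by (simp add: twofac_def kq_def e1 norm21_def norm2q_def N1_def Nq_def b_def e_def)
    also have "\<dots> = Y powr e"
      using N1pos Nqpos by (simp add: Y_def powr_minus_divide powr_divide powr_mult)
    finally have "real k < Y powr e" using kl by simp
    then have "real k powr (1/e) < (Y powr e) powr (1/e)"
      using powr_less_mono2[of "1/e" "real k" "Y powr e"] epos by simp
    also have "\<dots> = Y" using epos Ypos by (simp add: powr_powr)
    finally have kY: "real k powr (1 - 1/r) < Y" using r by (simp add: e_def field_simps)
    have "(\<Sum>i\<in>S. b i) \<le> real (card S) powr (1 - 1/r) * (\<Sum>i\<in>S. b i powr r) powr (1/r)"
      by (rule holder_part[OF r finS b0])
    also have "\<dots> \<le> real k powr (1 - 1/r) * Nq"
      unfolding Nq_def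
      apply (rule mult_mono)
      using r cS S b0 by (auto intro!: powr_mono2 sum_nonneg sum_mono2)
    also have "\<dots> < Y * Nq"
      using kY Nqpos by simp
    also have "\<dots> = N1 / 2" using Nqpos by (simp add: Y_def)
    finally show ?thesis using N1eq b_def by simp
  qed
qed

lemma matvec_diff: "matvec m N A (\<lambda>j. z j - x j) = (\<lambda>i. matvec m N A z i - matvec m N A x i)"
  by (auto simp: matvec_def right_diff_distrib sum_subtractf)

theorem proposition1:
  fixes m p n k :: nat and A :: "nat \<Rightarrow> nat \<Rightarrow> real" and x :: "nat \<Rightarrow> real"
  assumes x_vec: "x \<in> vecs (p * n)"
    and x_sparse: "norm20 p n x \<le> k"
    and q_ex: "\<exists>q::ereal. 1 < q \<and>
      ereal (real k) < (INF z \<in> kernel m (p * n) A - {\<lambda>_. 0}. ereal (twofac q * kq p n q z))"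
  shows "{z \<in> vecs (p * n). matvec m (p * n) A z = matvec m (p * n) A x \<and>
            (\<forall>w \<in> vecs (p * n). matvec m (p * n) A w = matvec m (p * n) A x
               \<longrightarrow> norm21 p n z \<le> norm21 p n w)} = {x}"
proof -
  obtain q :: ereal where q: "1 < q"
    and hyp: "ereal (real k) < (INF z \<in> kernel m (p * n) A - {\<lambda>_. 0}. ereal (twofac q * kq p n q z))"
    using q_ex by blast
  define S where "S = {i. i < p \<and> (\<exists>j<n. x (i * n + j) \<noteq> 0)}"
  have Ssub: "S \<subseteq> {..<p}" by (auto simp: S_def)
  have cS: "card S \<le> k" using x_sparse by (simp add: norm20_def S_def)
  define R where "R = {..<p} - S"
  have xR: "\<And>i j. i \<in> R \<Longrightarrow> j < n \<Longrightarrow> x (i*n+j) = 0" by (auto simp: R_def S_def)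
  have split: "\<And>f. (\<Sum>i<p. f i) = (\<Sum>i\<in>R. f i) + (\<Sum>i\<in>S. f i)"
    unfolding R_def by (rule sum.subset_diff[OF Ssub]) simp
  have strict: "norm21 p n x < norm21 p n z"
    if z: "z \<in> vecs (p*n)" "matvec m (p * n) A z = matvec m (p * n) A x" "z \<noteq> x" for z
  proof -
    define h where "h = (\<lambda>j. z j - x j)"
    have hk: "h \<in> kernel m (p*n) A - {\<lambda>_. 0}"
      using z x_vec unfolding h_def kernel_def vecs_def
      by (auto simp: matvec_diff fun_eq_iff)
    have key: "2 * (\<Sum>i\<in>S. block_norm n h i) < norm21 p n h"
      by (rule nsp[OF hk Ssub cS q hyp])
    have hR: "\<And>i. i \<in> R \<Longrightarrow> block_norm n z i = block_norm n h i"
      using xR by (simp add: block_norm_def h_def)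
    have xR0: "\<And>i. i \<in> R \<Longrightarrow> block_norm n x i = 0"
      using xR by (simp add: bn_zero)
    have hS: "\<And>i. block_norm n x i \<le> block_norm n z i + block_norm n h i"
    proof -
      fix i
      have "block_norm n (\<lambda>j. x j - z j) i = block_norm n h i"
        by (simp add: block_norm_def h_def power2_commute)
      then show "block_norm n x i \<le> block_norm n z i + block_norm n h i"
        using bn_tri[of n x i z] by simp
    qed
    have n21x: "norm21 p n x = (\<Sum>i\<in>S. block_norm n x i)"
      unfolding norm21_def split using xR0 by simp
    have n21z: "norm21 p n z = (\<Sum>i\<in>R. block_norm n h i) + (\<Sum>i\<in>S. block_norm n z i)"
      unfolding norm21_def split using hR by simp
    have n21h: "norm21 p n h = (\<Sum>i\<in>R. block_norm n h i) + (\<Sum>i\<in>S. block_norm n h i)"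
      unfolding norm21_def split by simp
    have "(\<Sum>i\<in>S. block_norm n x i) \<le> (\<Sum>i\<in>S. block_norm n z i) + (\<Sum>i\<in>S. block_norm n h i)"
      unfolding sum.distrib[symmetric] by (rule sum_mono) (rule hS)
    then show ?thesis using key n21x n21z n21h by linarith
  qed
  show ?thesis
  proof (rule set_eqI, rule iffI)
    fix z assume "z \<in> {z \<in> vecs (p * n). matvec m (p * n) A z = matvec m (p * n) A x \<and>
            (\<forall>w \<in> vecs (p * n). matvec m (p * n) A w = matvec m (p * n) A x
               \<longrightarrow> norm21 p n z \<le> norm21 p n w)}"
    then have "z \<in> vecs (p*n)" "matvec m (p * n) A z = matvec m (p * n) A x" "norm21 p n z \<le> norm21 p n x"
      using x_vec by auto
    then show "z \<in> {x}" using strict by force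
  next
    fix z assume "z \<in> {x}"
    then show "z \<in> {z \<in> vecs (p * n). matvec m (p * n) A z = matvec m (p * n) A x \<and>
            (\<forall>w \<in> vecs (p * n). matvec m (p * n) A w = matvec m (p * n) A x
               \<longrightarrow> norm21 p n z \<le> norm21 p n w)}"
      using x_vec strict by (force intro: less_imp_le)
  qed
qed

end
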